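(* Let $n\ge1$ have binary expansion $n=\sum_{j=1}^{\ell}2^{m_j}$ with $\ell\ge1$ and integers $m_1>m_2>\cdots>m_\ell\ge0$. Then $$c_n=\sum_{j=2}^{\ell}2^{m_j}\bigl(m_1-m_j-2(j-2)\bigr).$$
   Context: Bifurcating trees: rooted trees in which every internal node has exactly two children; $\mathcal{T}_n$ is the set of isomorphism classes of bifurcating trees with $n$ leaves. For a node $w$, $\kappa_T(w)$ is its number of descendant leaves. The Colless index is $\mathcal{C}(T)=\sum_{v}|\kappa_T(v_1)-\kappa_T(v_2)|$, summed over internal nodes $v$ with children $v_1,v_2$; $c_n=\min\{\mathcal{C}(T):T\in\mathcal{T}_n\}$. *)

theory Defs
  imports Main
begin

text \<open>The datatype distinguishes left/right children; isomorphism classes are the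
  quotient under swapping children, which leaves both leaf count and Colless
  index unchanged, so the minimum below equals the minimum over T_n.\<close>
datatype btree = Leaf | Node btree btree

fun leaves :: "btree \<Rightarrow> nat" where
  "leaves Leaf = 1"
| "leaves (Node l r) = leaves l + leaves r"

fun colless :: "btree \<Rightarrow> nat" where
  "colless Leaf = 0"
| "colless (Node l r) = colless l + colless r + (if leaves l \<ge> leaves r then leaves l - leaves r else leaves r - leaves l)"

definition min_colless :: "nat \<Rightarrow> nat" where
  "min_colless n = Min {colless t | t. leaves t = n}"

end

theory Submission
  imports Defs
begin

function ff :: "nat \<Rightarrow> nat" where
  "ff n = (if n \<le> 1 then 0 else ff (n div 2) + ff (n - n div 2) + n mod 2)"
  by auto
termination by (relation "measure id") auto

declare ff.simps [simp del]

lemma ff0 [simp]: "ff 0 = 0" by (simp add: ff.simps)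
lemma ff1 [simp]: "ff (Suc 0) = 0" by (simp add: ff.simps)
lemma ff_even: "ff (2*n) = 2 * ff n"
proof (cases "n = 0")
  case False
  then show ?thesis by (subst ff.simps) simp
qed simp
lemma ff_odd: "n \<ge> 1 \<Longrightarrow> ff (2*n+1) = ff n + ff (n+1) + 1"
  by (subst ff.simps) simp

lemma ff_pow2 [simp]: "ff (2^m) = 0"
  by (induction m) (simp_all add: ff_even)

function bal :: "nat \<Rightarrow> btree" where
  "bal n = (if n \<le> 1 then Leaf else Node (bal (n - n div 2)) (bal (n div 2)))"
  by auto
termination by (relation "measure id") auto

declare bal.simps [simp del]

lemma bal_leaves: "n \<ge> 1 \<Longrightarrow> leaves (bal n) = n"
proof (induction n rule: less_induct)
  case (less n)
  show ?case
  proof (cases "n \<le> 1")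
    case True then show ?thesis using less.prems by (subst bal.simps) simp
  next
    case False
    then show ?thesis by (subst bal.simps) (simp add: less.IH)
  qed
qed

lemma bal_colless: "n \<ge> 1 \<Longrightarrow> colless (bal n) = ff n"
proof (induction n rule: less_induct)
  case (less n)
  show ?case
  proof (cases "n \<le> 1")
    case True then show ?thesis using less.prems by (subst bal.simps) (simp add: ff.simps)
  next
    case False
    then show ?thesis
      apply (subst bal.simps, subst ff.simps)
      apply (simp add: less.IH bal_leaves)
      by presburger
  qed
qed

lemma ineq: "int (ff (a+b)) \<le> int (ff a) + int (ff b) + \<bar>int a - int b\<bar>"
proof (induction "a+b" arbitrary: a b rule: less_induct)
  case less
  have mixed: "int (ff (x+y)) \<le> int (ff x) + int (ff y) + \<bar>int x - int y\<bar>"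
    if "x + y = a + b" "x = 2*p" "y = 2*q+1" "p \<ge> 1" for x y p q
  proof -
    have s: "ff (x+y) = ff (p+q) + ff (p+q+1) + 1"
      using that ff_odd[of "p+q"] by (simp add: algebra_simps)
    have fx: "ff x = 2 * ff p" using that ff_even by simp
    have i1: "int (ff (p+q)) \<le> int (ff p) + int (ff q) + \<bar>int p - int q\<bar>"
      using less.hyps[of p q] that by simp
    have i2: "int (ff (p+(q+1))) \<le> int (ff p) + int (ff (q+1)) + \<bar>int p - int (q+1)\<bar>"
      using less.hyps[of p "q+1"] that by simp
    show ?thesis
    proof (cases "q = 0")
      case True
      then show ?thesis using s fx i2 that by simp
    next
      case False
      then have fy: "ff y = ff q + ff (q+1) + 1" using that ff_odd by simp
      show ?thesis using s fx fy i1 i2 that by (simp add: abs_if split: if_splits)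
    qed
  qed
  show ?case
  proof (cases "a = 0 \<or> b = 0")
    case True
    then show ?thesis by auto
  next
    case False
    then have a1: "a \<ge> 1" and b1: "b \<ge> 1" by auto
    consider (ee) "even a" "even b" | (oo) "odd a" "odd b" | (eo) "even a" "odd b" | (oe) "odd a" "even b"
      by blast
    then show ?thesis
    proof cases
      case ee
      then obtain p q where ab: "a = 2*p" "b = 2*q" by (auto elim!: evenE)
      have "int (ff (p+q)) \<le> int (ff p) + int (ff q) + \<bar>int p - int q\<bar>"
        using less.hyps[of p q] ab a1 by simp
      moreover have "ff (a+b) = 2 * ff (p+q)" using ab ff_even[of "p+q"] by (simp add: algebra_simps)
      ultimately show ?thesis using ab ff_even by (simp add: abs_if split: if_splits)
    next
      case oo
      then obtain p q where ab: "a = 2*p+1" "b = 2*q+1" by (auto elim!: oddE)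
      have s: "ff (a+b) = 2 * ff (p+q+1)" using ab ff_even[of "p+q+1"] by (simp add: algebra_simps)
      have i1: "int (ff (p+(q+1))) \<le> int (ff p) + int (ff (q+1)) + \<bar>int p - int (q+1)\<bar>"
        using less.hyps[of p "q+1"] ab by simp
      have i2: "int (ff ((p+1)+q)) \<le> int (ff (p+1)) + int (ff q) + \<bar>int (p+1) - int q\<bar>"
        using less.hyps[of "p+1" q] ab by simp
      show ?thesis
      proof (cases "p = 0")
        case p0: True
        show ?thesis
        proof (cases "q = 0")
          case True then show ?thesis using p0 ab s by (simp add: ff_even[of 1, simplified])
        next
          case False
          then have fy: "ff b = ff q + ff (q+1) + 1" using ab ff_odd by simp
          show ?thesis using p0 s fy i2 ab by (simp add: abs_if split: if_splits)
        qed
      next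
        case pn: False
        then have fx: "ff a = ff p + ff (p+1) + 1" using ab ff_odd by simp
        show ?thesis
        proof (cases "q = 0")
          case True then show ?thesis using fx s i1 ab by (simp add: abs_if split: if_splits)
        next
          case False
          then have fy: "ff b = ff q + ff (q+1) + 1" using ab ff_odd by simp
          show ?thesis using fx fy s i1 i2 ab by (simp add: abs_if split: if_splits)
        qed
      qed
    next
      case eo
      then obtain p q where ab: "a = 2*p" "b = 2*q+1" by (auto elim!: evenE oddE)
      then show ?thesis using mixed[of a b p q] a1 by simp
    next
      case oe
      then obtain p q where ab: "b = 2*p" "a = 2*q+1" by (auto elim!: evenE oddE)
      then have "int (ff (b+a)) \<le> int (ff b) + int (ff a) + \<bar>int b - int a\<bar>"
        using mixed[of b a p q] b1 by simp
      then show ?thesis by (simp add: add.commute abs_minus_commute)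
    qed
  qed
qed


lemma leaves_pos: "leaves t \<ge> 1"
  by (induction t) auto

lemma colless_lb: "ff (leaves t) \<le> colless t"
proof (induction t)
  case Leaf then show ?case by simp
next
  case (Node l r)
  have "int (ff (leaves l + leaves r)) \<le> int (ff (leaves l)) + int (ff (leaves r)) + \<bar>int (leaves l) - int (leaves r)\<bar>"
    by (rule ineq)
  then show ?case using Node by (auto simp: abs_if split: if_splits)
qed

lemma arith_aux: "(a::nat) \<ge> 1 \<Longrightarrow> b \<ge> 1 \<Longrightarrow> cl \<le> a*a \<Longrightarrow> cr \<le> b*b \<Longrightarrow>
  cl + cr + (if a \<ge> b then a - b else b - a) \<le> (a+b)*(a+b)"
proof -
  assume h: "a \<ge> 1" "b \<ge> 1" "cl \<le> a*a" "cr \<le> b*b"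
  have "a \<le> a*b" "b \<le> a*b" using h by simp_all
  moreover have "(a+b)*(a+b) = a*a + b*b + 2*(a*b)" by (simp add: algebra_simps)
  ultimately show ?thesis using h
  proof (cases "b \<le> a")
    case True
    then have "(if a \<ge> b then a - b else b - a) = a - b" by simp
    then show ?thesis using h \<open>a \<le> a*b\<close> \<open>b \<le> a*b\<close> \<open>(a+b)*(a+b) = _\<close> by linarith
  next
    case False
    then have "(if a \<ge> b then a - b else b - a) = b - a" by simp
    then show ?thesis using h \<open>a \<le> a*b\<close> \<open>b \<le> a*b\<close> \<open>(a+b)*(a+b) = _\<close> by linarith
  qed
qed

lemma colless_ub: "colless t \<le> leaves t * leaves t"
proof (induction t)
  case Leaf then show ?case by simp
next
  case (Node l r)
  then show ?case using arith_aux[OF leaves_pos leaves_pos Node.IH] by simp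
qed


lemma min_colless_eq: "n \<ge> 1 \<Longrightarrow> min_colless n = ff n"
proof -
  assume n: "n \<ge> 1"
  let ?S = "{colless t |t. leaves t = n}"
  have fin: "finite ?S"
  proof (rule finite_subset[of _ "{..n*n}"])
    show "?S \<subseteq> {..n*n}"
    proof
      fix x assume "x \<in> ?S"
      then obtain t where "x = colless t" "leaves t = n" by blast
      then show "x \<in> {..n*n}" using colless_ub[of t] by simp
    qed
  qed simp
  have lb: "\<And>y. y \<in> ?S \<Longrightarrow> ff n \<le> y"
  proof -
    fix y assume "y \<in> ?S"
    then obtain t where "y = colless t" "leaves t = n" by blast
    then show "ff n \<le> y" using colless_lb[of t] by simp
  qed
  have mem: "ff n \<in> ?S"
  proof -
    have "colless (bal n) = ff n \<and> leaves (bal n) = n" using bal_leaves[OF n] bal_colless[OF n] by simp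
    then show ?thesis unfolding mem_Collect_eq by (intro exI[of _ "bal n"]) simp
  qed
  show ?thesis unfolding min_colless_def by (rule Min_eqI[OF fin lb mem])
qed


lemma topbit: "t < m \<Longrightarrow> 2^t \<le> r \<Longrightarrow> r < 2^(t+1) \<Longrightarrow>
  int (ff (2^m + r)) = int (ff r) + (int m - int t - 2) * int r + 2^(t+1)"
proof (induction m arbitrary: r t)
  case 0 then show ?case by simp
next
  case (Suc m)
  show ?case
  proof (cases "even r")
    case True
    then obtain r' where r: "r = 2*r'" by (auto elim!: evenE)
    have "t \<noteq> 0"
    proof
      assume "t = 0" then show False using Suc.prems r by simp
    qed
    then obtain t' where t: "t = Suc t'" by (cases t) auto
    have b1: "2^t' \<le> r'" using Suc.prems(2) r t by simp
    have b2: "r' < 2^(t'+1)" using Suc.prems(3) r t by simp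
    have b3: "t' < m" using Suc.prems(1) t by simp
    have "2^(Suc m) + r = 2 * (2^m + r')" using r by simp
    then have e1: "ff (2^(Suc m) + r) = 2 * ff (2^m + r')" using ff_even[of "2^m + r'"] by simp
    have e2: "ff r = 2 * ff r'" using r ff_even by simp
    have ih: "int (ff (2^m + r')) = int (ff r') + (int m - int t' - 2) * int r' + 2^(t'+1)"
      using Suc.IH[OF b3 b1 b2] .
    have "int (ff (2^(Suc m) + r)) = 2 * int (ff (2^m + r'))" using e1 by simp
    also have "\<dots> = 2 * int (ff r') + (int m - int t' - 2) * (2 * int r') + 2 * 2^(t'+1)"
      unfolding ih by (simp add: algebra_simps)
    also have "\<dots> = int (ff r) + (int (Suc m) - int t - 2) * int r + 2^(t+1)"
      using e2 r t by simp
    finally show ?thesis .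
  next
    case False
    then obtain r' where r: "r = 2*r'+1" by (auto elim!: oddE)
    have e: "2^(Suc m) + r = 2 * (2^m + r') + 1" using r by simp
    have s: "ff (2^(Suc m) + r) = ff (2^m + r') + ff (2^m + r' + 1) + 1"
      unfolding e
    proof (rule ff_odd)
      have "1 \<le> (2::nat)^m" by simp
      then show "1 \<le> 2^m + r'" by linarith
    qed
    show ?thesis
    proof (cases "r' = 0")
      case True
      have t0: "t = 0"
      proof (rule ccontr)
        assume "t \<noteq> 0"
        then have "(2::nat) \<le> 2^t" by (cases t) auto
        then show False using Suc.prems(2) r True by simp
      qed
      show ?thesis
      proof (cases "m = 0")
        case True then show ?thesis using s r t0 \<open>r' = 0\<close> using ff_even[of 1] by (simp add: numeral_2_eq_2)
      next
        case False
        then have "int (ff (2^m + 1)) = int (ff 1) + (int m - int 0 - 2) * int 1 + 2^(0+1)"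
          using Suc.IH[of 0 1] by simp
        then have "int (ff (2^m + 1)) = int m" by simp
        then show ?thesis using s r t0 \<open>r' = 0\<close> by simp
      qed
    next
      case False
      have "t \<noteq> 0"
      proof
        assume "t = 0" then show False using Suc.prems r False by simp
      qed
      then obtain t' where t: "t = Suc t'" by (cases t) auto
      have b1: "2^t' \<le> r'" using Suc.prems(2) r t by simp
      have b2: "r' < 2^(t'+1)" using Suc.prems(3) r t by simp
      have b3: "t' < m" using Suc.prems(1) t by simp
      have fr: "ff r = ff r' + ff (r'+1) + 1" using r ff_odd[of r'] False by simp
      have i1: "int (ff (2^m + r')) = int (ff r') + (int m - int t' - 2) * int r' + 2^(t'+1)"
        using Suc.IH[OF b3 b1 b2] .
      show ?thesis
      proof (cases "r' + 1 < 2^(t'+1)")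
        case True
        have "2^t' \<le> r'+1" using b1 by simp
        have i2: "int (ff (2^m + (r'+1))) = int (ff (r'+1)) + (int m - int t' - 2) * int (r'+1) + 2^(t'+1)"
          using Suc.IH[OF b3 \<open>2^t' \<le> r'+1\<close> True] .
        have "int (ff (2^(Suc m) + r)) = int (ff (2^m + r')) + int (ff (2^m + (r'+1))) + 1"
          using s by simp
        also have "\<dots> = int (ff r) + (int m - int t' - 2) * (2 * int r' + 1) + 2 * 2^(t'+1)"
          unfolding i1 i2 using fr by (simp add: algebra_simps)
        also have "\<dots> = int (ff r) + (int (Suc m) - int t - 2) * int r + 2^(t+1)"
          using r t by simp
        finally show ?thesis .
      next
        case False
        then have rr: "r' + 1 = 2^t" using b2 t by simp
        have i2: "int (ff (2^m + 2^t)) = (int m - int t) * 2^t"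
        proof (cases "t < m")
          case True
          have "int (ff (2^m + 2^t)) = int (ff (2^t)) + (int m - int t - 2) * int (2^t) + 2^(t+1)"
            using Suc.IH[OF True, of "2^t"] by simp
          then show ?thesis by (simp add: algebra_simps)
        next
          case False
          then have "t = m" using Suc.prems(1) by simp
          then have "2^m + 2^t = (2::nat)^(Suc m)" by simp
          then have "ff (2^m + 2^t) = 0" by (metis ff_pow2)
          then show ?thesis using \<open>t = m\<close> by simp
        qed
        have fr2: "ff r = ff r' + 1" using fr rr by simp
        have "int (r' + 1) = int (2^t)" using rr by (simp only:)
        then have r'v: "int r' = 2^t - 1" by simp
        have "int (ff (2^(Suc m) + r)) = int (ff (2^m + r')) + int (ff (2^m + 2^t)) + 1"
        proof -
          have h: "2^m + r' + 1 = 2^m + 2^t" using rr by simp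
          show ?thesis using s unfolding h by simp
        qed
        also have "\<dots> = int (ff r) + (int (Suc m) - int t - 2) * int r + 2^(t+1)"
        proof -
          have r'w: "int r' = 2 * 2^t' - 1" using r'v t by simp
          show ?thesis unfolding i1 i2 using fr2 r t by (simp add: r'w algebra_simps)
        qed
        finally show ?thesis .
      qed
    qed
  qed
qed


definition vl :: "nat list \<Rightarrow> nat" where
  "vl ms = (\<Sum>j<length ms. 2 ^ (ms ! j))"

lemma vl_Nil [simp]: "vl [] = 0" by (simp add: vl_def)
lemma vl_Cons [simp]: "vl (a # u) = 2^a + vl u"
  unfolding vl_def by (simp only: length_Cons sum.lessThan_Suc_shift) simp

lemma vl_bound: "sorted_wrt (>) xs \<Longrightarrow> \<forall>x\<in>set xs. x < a \<Longrightarrow> vl xs < 2^a"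
proof (induction xs arbitrary: a)
  case Nil then show ?case by simp
next
  case (Cons b ys)
  have ba: "b < a" using Cons.prems by simp
  have "vl ys < 2^b" using Cons.IH[of b] Cons.prems by simp
  then have "vl (b # ys) < 2^(Suc b)" by simp
  also have "\<dots> \<le> 2^a" using ba by (intro power_increasing) auto
  finally show ?case .
qed

definition W :: "nat \<Rightarrow> nat list \<Rightarrow> int" where
  "W m t = (\<Sum>i<length t. 2 ^ (t ! i) * (int m - int (t ! i) - 2 * int i))"

lemma W_Nil [simp]: "W m [] = 0" by (simp add: W_def)

lemma W_Cons: "W m (a # u) = 2^a * (int m - int a) + W m u - 2 * int (vl u)"
proof -
  have "W m (a # u) = 2^a * (int m - int a) +
      (\<Sum>i<length u. 2 ^ (u ! i) * (int m - int (u ! i) - 2 * int i) - 2 * 2^(u ! i))"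
    unfolding W_def by (simp only: length_Cons sum.lessThan_Suc_shift) (simp add: algebra_simps)
  also have "\<dots> = 2^a * (int m - int a) + W m u - 2 * int (vl u)"
    unfolding W_def vl_def by (simp add: sum_subtractf sum_distrib_left)
  finally show ?thesis .
qed

lemma W_lin: "W m u = W 0 u + int m * int (vl u)"
  by (induction u) (simp_all add: W_Cons algebra_simps)

lemma main_formula: "sorted_wrt (>) (m # t) \<Longrightarrow> int (ff (vl (m # t))) = W m t"
proof (induction t arbitrary: m)
  case Nil then show ?case by simp
next
  case (Cons a u)
  have am: "a < m" using Cons.prems by simp
  have so: "sorted_wrt (>) (a # u)" using Cons.prems by simp
  have ih: "int (ff (vl (a # u))) = W a u" using Cons.IH[OF so] .
  have vu: "vl u < 2^a" using vl_bound[of u a] so by simp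
  have b1: "2^a \<le> vl (a # u)" by simp
  have b2: "vl (a # u) < 2^(a+1)" using vu by simp
  have "int (ff (vl (m # a # u))) = int (ff (2^m + vl (a # u)))" by simp
  also have "\<dots> = int (ff (vl (a # u))) + (int m - int a - 2) * int (vl (a # u)) + 2^(a+1)"
    by (rule topbit[OF am b1 b2])
  also have "\<dots> = W m (a # u)"
    unfolding ih W_Cons using W_lin[of m u] W_lin[of a u] by (simp add: algebra_simps)
  finally show ?case .
qed

lemma sum_shift2: "(\<Sum>j\<in>{2..Suc n}. (g j :: int)) = (\<Sum>i<n. g (i+2))"
  by (induction n) (simp_all add: atLeastAtMostSuc_conv)

theorem theorem2:
  fixes n :: nat and ms :: "nat list"
  assumes "n \<ge> 1"
    and "ms \<noteq> []"
    and "sorted_wrt (>) ms"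
    and "n = (\<Sum>j<length ms. 2 ^ (ms ! j))"
  shows "int (min_colless n) =
    (\<Sum>j\<in>{2..length ms}. 2 ^ (ms ! (j - 1)) *
        (int (ms ! 0) - int (ms ! (j - 1)) - 2 * (int j - 2)))"
proof -
  obtain m t where ms: "ms = m # t" using assms(2) by (cases ms) auto
  have nv: "n = vl ms" using assms(4) by (simp add: vl_def)
  have "int (min_colless n) = int (ff (vl (m # t)))" using min_colless_eq[OF assms(1)] nv ms by simp
  also have "\<dots> = W m t" using main_formula assms(3) ms by simp
  also have "\<dots> = (\<Sum>j\<in>{2..length ms}. 2 ^ (ms ! (j - 1)) *
        (int (ms ! 0) - int (ms ! (j - 1)) - 2 * (int j - 2)))"
    unfolding ms length_Cons sum_shift2 W_def by (simp add: algebra_simps)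
  finally show ?thesis .
qed

end
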